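(* Fix $0<r_1,r_2\le 1$ and $n\ge 1$. Consider a cycle $A\to B^1\to B^2\to\cdots\to B^n\to A$ of $n+1$ distinct pools with positive reserves: pool $1$ is $A\rightleftharpoons B^1$ with reserves $a_1$ of $A$ and $b^1_1$ of $B^1$; for $2\le k\le n$, pool $k$ is $B^{k-1}\rightleftharpoons B^k$ with reserves $b^{k-1}_k$ of $B^{k-1}$ and $b^k_k$ of $B^k$; pool $n+1$ is $B^n\rightleftharpoons A$ with reserves $b^n_{n+1}$ of $B^n$ and $a_{n+1}$ of $A$. Define the arbitrage index $$I=\frac{a_{n+1}\, b^1_1\, b^2_2\cdots b^n_n}{a_1\, b^1_2\, b^2_3\cdots b^n_{n+1}}.$$ For $\delta\ge 0$ let $U_{\rightarrow}(\delta)$ be the net gain (amount of $A$ received minus $\delta$) from swapping $\delta$ of $A$ sequentially through the pools in the order $A\to B^1\to\cdots\to B^n\to A$, and $U_{\leftarrow}(\delta)$ the net gain from swapping $\delta$ of $A$ through the same pools in the reversed order $A\to B^n\to\cdots\to B^1\to A$. If $I>\dfrac{1}{r_1^{n+1}r_2^{n+1}}$, then there exists $\delta>0$ with $U_{\rightarrow}(\delta)>0$, and $U_{\leftarrow}(\delta)<0$ for every $\delta>0$.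
   Context: Constant-product automated market maker with fees (Uniswap V2 model). A pool between tokens $X$ and $Y$ holds reserves $x>0$ of $X$ and $y>0$ of $Y$. Swapping an input amount $\delta\ge 0$ of $X$ into the pool returns $\mathrm{out}_{x,y}(\delta)=\dfrac{r_1 r_2\, y\,\delta}{x+r_1\delta}$ of $Y$ (and swapping in $Y$ is symmetric with the roles of $x,y$ exchanged), where $r_1,r_2\in(0,1]$ are fixed fee parameters (Uniswap V2: $r_1=0.997$, $r_2=1$). In a sequential (cyclic) trade, the entire output of each swap is the input of the next swap, and each pool is used once with its initial reserves. *)

theory Defs
  imports Complex_Main
begin

text \<open>Constant-product swap: input d of the token with reserve x into a pool with
  reserves x and y returns r1 r2 y d / (x + r1 d) of the other token.\<close>
definition swap_out :: "real \<Rightarrow> real \<Rightarrow> real \<Rightarrow> real \<Rightarrow> real \<Rightarrow> real" where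
  "swap_out r1 r2 x y d = r1 * r2 * y * d / (x + r1 * d)"

text \<open>Cycle of n+1 pools, indexed k = 1..n+1.  Pool k holds reserve L k of the token
  entering it in the forward direction A -> B^1 -> ... -> B^n -> A and reserve R k of the
  token leaving it.  So L 1 = a_1, R 1 = b^1_1; L k = b^(k-1)_k, R k = b^k_k (2 <= k <= n);
  L (n+1) = b^n_(n+1), R (n+1) = a_(n+1).\<close>

definition arb_index :: "nat \<Rightarrow> (nat \<Rightarrow> real) \<Rightarrow> (nat \<Rightarrow> real) \<Rightarrow> real" where
  "arb_index n L R = (\<Prod>k=1..n+1. R k) / (\<Prod>k=1..n+1. L k)"

definition U_fwd :: "real \<Rightarrow> real \<Rightarrow> nat \<Rightarrow> (nat \<Rightarrow> real) \<Rightarrow> (nat \<Rightarrow> real) \<Rightarrow> real \<Rightarrow> real" where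
  "U_fwd r1 r2 n L R d =
     fold (\<lambda>k x. swap_out r1 r2 (L k) (R k) x) [1..<n+2] d - d"

definition U_bwd :: "real \<Rightarrow> real \<Rightarrow> nat \<Rightarrow> (nat \<Rightarrow> real) \<Rightarrow> (nat \<Rightarrow> real) \<Rightarrow> real \<Rightarrow> real" where
  "U_bwd r1 r2 n L R d =
     fold (\<lambda>k x. swap_out r1 r2 (R k) (L k) x) (rev [1..<n+2]) d - d"

end

theory Submission
  imports Defs
begin

lemma fold_form:
  fixes r1 r2 :: real and X Y :: "nat \<Rightarrow> real"
  assumes r: "0 < r1" "0 < r2" and pos: "\<forall>k\<in>set ks. 0 < X k \<and> 0 < Y k"
  shows "\<exists>C\<ge>0. \<forall>d\<ge>0. fold (\<lambda>k x. swap_out r1 r2 (X k) (Y k) x) ks d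
        = ((r1*r2)^length ks * prod_list (map Y ks)) * d / (prod_list (map X ks) + C * d)"
  using pos
proof (induction ks)
  case Nil
  show ?case by (intro exI[of _ 0]) simp
next
  case (Cons k ks)
  then obtain C where C: "C \<ge> 0" and IH: "\<forall>d\<ge>0. fold (\<lambda>k x. swap_out r1 r2 (X k) (Y k) x) ks d
        = ((r1*r2)^length ks * prod_list (map Y ks)) * d / (prod_list (map X ks) + C * d)" by auto
  have Xk: "X k > 0" and Yk: "Y k > 0" using Cons.prems by auto
  have Bp: "prod_list (map X ks) > 0" using Cons.prems
    by (induction ks) (auto)
  define A where "A = (r1*r2)^length ks * prod_list (map Y ks)"
  define B where "B = prod_list (map X ks)"
  have Bp': "B > 0" using Bp B_def by simp
  show ?case
  proof (intro exI[of _ "B * r1 + C * (r1*r2*Y k)"] conjI allI impI)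
    show "0 \<le> B * r1 + C * (r1 * r2 * Y k)" using Bp' C r Yk by simp
    fix d :: real assume d: "0 \<le> d"
    have q: "X k + r1 * d > 0" using Xk r d by (simp add: add_pos_nonneg)
    have fd: "swap_out r1 r2 (X k) (Y k) d \<ge> 0" unfolding swap_out_def
      using q r Yk d by simp
    have "fold (\<lambda>k x. swap_out r1 r2 (X k) (Y k) x) (k#ks) d
        = A * swap_out r1 r2 (X k) (Y k) d / (B + C * swap_out r1 r2 (X k) (Y k) d)"
      using IH fd by (simp add: A_def B_def)
    also have "\<dots> = (A * (r1*r2*Y k)) * d / (B * X k + (B * r1 + C * (r1*r2*Y k)) * d)"
    proof -
      define p where "p = r1*r2*Y k*d"
      define qq where "qq = X k + r1*d"
      have qp: "qq > 0" using q qq_def by simp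
      have e1: "B + C*(p/qq) = (B*qq + C*p)/qq" using qp by (simp add: field_simps)
      have sw: "swap_out r1 r2 (X k) (Y k) d = p/qq" by (simp add: swap_out_def p_def qq_def)
      have e2: "B*qq + C*p = B * X k + (B * r1 + C * (r1*r2*Y k)) * d"
        unfolding qq_def p_def by (simp add: algebra_simps)
      have e3: "A*p = (A * (r1*r2*Y k)) * d" unfolding p_def by (simp add: algebra_simps)
      have "A * (p/qq) / (B + C*(p/qq)) = A*p/(B*qq + C*p)"
        unfolding e1 using qp by (simp add: field_simps)
      then show ?thesis by (simp only: sw e2 e3)
    qed
    finally show "fold (\<lambda>k x. swap_out r1 r2 (X k) (Y k) x) (k#ks) d
       = (r1 * r2) ^ length (k # ks) * prod_list (map Y (k # ks)) * d /
         (prod_list (map X (k # ks)) + (B * r1 + C * (r1 * r2 * Y k)) * d)"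
      by (simp add: A_def B_def algebra_simps)
  qed
qed

lemma prod_upt: "prod_list (map (f::nat\<Rightarrow>real) [1..<n+2]) = (\<Prod>k=1..n+1. f k)"
proof -
  have "prod_list (map f [1..<n+2]) = prod f (set [1..<n+2])"
    by (rule prod.distinct_set_conv_list[symmetric]) simp
  also have "set [1..<n+2] = {1..n+1}" by auto
  finally show ?thesis .
qed

theorem lemma1:
  fixes r1 r2 :: real and n :: nat and L R :: "nat \<Rightarrow> real"
  assumes "0 < r1" "r1 \<le> 1" "0 < r2" "r2 \<le> 1"
    and "n \<ge> 1"
    and "\<forall>k\<in>{1..n+1}. 0 < L k \<and> 0 < R k"
    and "arb_index n L R > 1 / (r1 ^ (n+1) * r2 ^ (n+1))"
  shows "(\<exists>\<delta>>0. U_fwd r1 r2 n L R \<delta> > 0) \<and> (\<forall>\<delta>>0. U_bwd r1 r2 n L R \<delta> < 0)"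
proof -
  define c where "c = (r1*r2)^(n+1)"
  define PL where "PL = (\<Prod>k=1..n+1. L k)"
  define PR where "PR = (\<Prod>k=1..n+1. R k)"
  have PLp: "PL > 0" unfolding PL_def using assms(6) by (intro prod_pos) auto
  have PRp: "PR > 0" unfolding PR_def using assms(6) by (intro prod_pos) auto
  have cp: "c > 0" unfolding c_def using assms by simp
  have c1: "c \<le> 1" unfolding c_def using assms
    by (simp add: power_le_one mult_le_one)
  have "PR / PL > 1 / c" using assms(7)
    by (simp add: arb_index_def PR_def PL_def c_def power_mult_distrib mult_ac)
  hence key: "c * PR > PL" using PLp cp by (simp add: field_simps)
  have pos: "\<forall>k\<in>set [1..<n+2]. 0 < L k \<and> 0 < R k" using assms(6) by auto
  have pos': "\<forall>k\<in>set (rev [1..<n+2]). 0 < R k \<and> 0 < L k" using assms(6) by auto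
  have len: "length [1..<n+2] = n+1" by simp
  have lenr: "length (rev [1..<n+2]) = n+1" by simp
  have eR: "prod_list (map R [1..<n+2]) = PR" unfolding PR_def by (rule prod_upt)
  have eL: "prod_list (map L [1..<n+2]) = PL" unfolding PL_def by (rule prod_upt)
  have eR': "prod_list (map R (rev [1..<n+2])) = PR" unfolding rev_map[symmetric] prod_list.rev by (rule eR)
  have eL': "prod_list (map L (rev [1..<n+2])) = PL" unfolding rev_map[symmetric] prod_list.rev by (rule eL)
  obtain C where C: "C \<ge> 0" and F0: "\<forall>d\<ge>0. fold (\<lambda>k x. swap_out r1 r2 (L k) (R k) x) [1..<n+2] d
        = ((r1*r2)^length [1..<n+2] * prod_list (map R [1..<n+2])) * d / (prod_list (map L [1..<n+2]) + C * d)"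
    using fold_form[OF assms(1,3) pos] by blast
  have F: "\<forall>d\<ge>0. fold (\<lambda>k x. swap_out r1 r2 (L k) (R k) x) [1..<n+2] d
        = (c * PR) * d / (PL + C * d)"
    using F0 unfolding len eR eL c_def .
  obtain C' where C': "C' \<ge> 0" and G0: "\<forall>d\<ge>0. fold (\<lambda>k x. swap_out r1 r2 (R k) (L k) x) (rev [1..<n+2]) d
        = ((r1*r2)^length (rev [1..<n+2]) * prod_list (map L (rev [1..<n+2]))) * d / (prod_list (map R (rev [1..<n+2])) + C' * d)"
    using fold_form[OF assms(1,3) pos'] by blast
  have G: "\<forall>d\<ge>0. fold (\<lambda>k x. swap_out r1 r2 (R k) (L k) x) (rev [1..<n+2]) d
        = (c * PL) * d / (PR + C' * d)"
    using G0 unfolding lenr eR' eL' c_def .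
  have part1: "\<exists>\<delta>>0. U_fwd r1 r2 n L R \<delta> > 0"
  proof -
    define d where "d = (c*PR - PL) / (2*C + 1)"
    have dp: "d > 0" unfolding d_def using key C by simp
    have Ep: "2*C + 1 > 0" using C by simp
    have Dp: "c*PR - PL > 0" using key by simp
    have "C * (c*PR - PL) < (2*C+1) * (c*PR - PL)" using Dp C by (intro mult_strict_right_mono) auto
    hence "C * (c*PR - PL) / (2*C+1) < c*PR - PL" using Ep by (simp add: pos_divide_less_eq mult.commute)
    hence "C * d < c*PR - PL" unfolding d_def by simp
    hence "PL + C*d < c*PR" by simp
    hence "(PL + C*d) * d < (c*PR) * d" using dp by (intro mult_strict_right_mono) auto
    moreover have "PL + C*d > 0" using PLp C dp by (simp add: add_pos_nonneg)
    ultimately have "d < (c*PR) * d / (PL + C*d)"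
      by (simp add: pos_less_divide_eq mult.commute)
    hence "U_fwd r1 r2 n L R d > 0" unfolding U_fwd_def using F dp by simp
    thus ?thesis using dp by blast
  qed
  have part2: "\<forall>\<delta>>0. U_bwd r1 r2 n L R \<delta> < 0"
  proof (intro allI impI)
    fix d :: real assume dp: "d > 0"
    have "c * PL < c * (c * PR)" using key cp by simp
    also have "\<dots> \<le> PR" using c1 cp PRp
      by (simp add: mult_le_cancel_right1 mult_le_one)
    finally have lt: "c * PL < PR" .
    have "(c*PL) * d / (PR + C' * d) \<le> (c*PL) * d / PR"
      using PRp C' dp cp PLp by (intro divide_left_mono) (auto intro!: mult_pos_pos add_pos_nonneg)
    also have "\<dots> < d" using lt PRp dp by (simp add: field_simps)
    finally show "U_bwd r1 r2 n L R d < 0" unfolding U_bwd_def using G dp by simp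
  qed
  show ?thesis using part1 part2 by blast
qed

end
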